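(* Let $n\le 4$ and let $S$ be a real symmetric positive-definite $n\times n$ matrix. Then $S$ is Venkov-reduced with respect to $I_n$, i.e. $S\bullet I_n\le (gSg^{T})\bullet I_n$ for all $g\in GL_n(\mathbb Z)$, if and only if $gSg^{T}$ is Minkowski-reduced for some permutation matrix $g\in GL_n(\mathbb Z)$.
   Context: $S\bullet T:=\mathrm{Trace}(ST)$ for symmetric matrices $S,T$. Let $\mathbf e_1,\dots,\mathbf e_n$ be the standard basis of $\mathbb R^n$; a set $\{v_1,\dots,v_i\}\subset\mathbb Z^n$ is primitive if it is a subset of a basis of $\mathbb Z^n$. A symmetric positive-definite $S=(s_{ij})$ is Minkowski-reduced if for each $i=1,\dots,n$, $s_{ii}=\min\{v^{T}Sv: \{\mathbf e_1,\dots,\mathbf e_{i-1},v\}\text{ is a primitive set of }\mathbb Z^n\}$. *)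

theory Defs
  imports Complex_Main "HOL-Combinatorics.Permutations"
begin

text \<open>Matrices of size n x n are represented as functions nat => nat => real,
  only the entries with indices < n being relevant; indices run over 0..n-1,
  so index i corresponds to the paper's index i+1.\<close>

definition trace_n :: "nat \<Rightarrow> (nat \<Rightarrow> nat \<Rightarrow> real) \<Rightarrow> real" where
  "trace_n n A = (\<Sum>i<n. A i i)"

definition symmetric_n :: "nat \<Rightarrow> (nat \<Rightarrow> nat \<Rightarrow> real) \<Rightarrow> bool" where
  "symmetric_n n S \<longleftrightarrow> (\<forall>i<n. \<forall>j<n. S i j = S j i)"

definition qform :: "nat \<Rightarrow> (nat \<Rightarrow> nat \<Rightarrow> real) \<Rightarrow> (nat \<Rightarrow> real) \<Rightarrow> real" where
  "qform n S v = (\<Sum>i<n. \<Sum>j<n. v i * S i j * v j)"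

definition posdef_n :: "nat \<Rightarrow> (nat \<Rightarrow> nat \<Rightarrow> real) \<Rightarrow> bool" where
  "posdef_n n S \<longleftrightarrow> (\<forall>v. (\<exists>i<n. v i \<noteq> 0) \<longrightarrow> qform n S v > 0)"

definition mat_mult_n :: "nat \<Rightarrow> (nat \<Rightarrow> nat \<Rightarrow> real) \<Rightarrow> (nat \<Rightarrow> nat \<Rightarrow> real) \<Rightarrow> nat \<Rightarrow> nat \<Rightarrow> real" where
  "mat_mult_n n A B = (\<lambda>i j. \<Sum>k<n. A i k * B k j)"

definition transpose_n :: "(nat \<Rightarrow> nat \<Rightarrow> real) \<Rightarrow> nat \<Rightarrow> nat \<Rightarrow> real" where
  "transpose_n A = (\<lambda>i j. A j i)"

definition congr_n :: "nat \<Rightarrow> (nat \<Rightarrow> nat \<Rightarrow> real) \<Rightarrow> (nat \<Rightarrow> nat \<Rightarrow> real) \<Rightarrow> nat \<Rightarrow> nat \<Rightarrow> real" where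
  "congr_n n g S = mat_mult_n n (mat_mult_n n g S) (transpose_n g)"

definition is_identity_n :: "nat \<Rightarrow> (nat \<Rightarrow> nat \<Rightarrow> real) \<Rightarrow> bool" where
  "is_identity_n n A \<longleftrightarrow> (\<forall>i<n. \<forall>j<n. A i j = (if i = j then 1 else 0))"

definition int_matrix_n :: "nat \<Rightarrow> (nat \<Rightarrow> nat \<Rightarrow> real) \<Rightarrow> bool" where
  "int_matrix_n n g \<longleftrightarrow> (\<forall>i<n. \<forall>j<n. g i j \<in> \<int>)"

definition GL_Z :: "nat \<Rightarrow> (nat \<Rightarrow> nat \<Rightarrow> real) \<Rightarrow> bool" where
  "GL_Z n g \<longleftrightarrow> int_matrix_n n g \<and>
     (\<exists>h. int_matrix_n n h \<and> is_identity_n n (mat_mult_n n g h) \<and> is_identity_n n (mat_mult_n n h g))"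

definition perm_matrix_n :: "nat \<Rightarrow> (nat \<Rightarrow> nat \<Rightarrow> real) \<Rightarrow> bool" where
  "perm_matrix_n n g \<longleftrightarrow> (\<exists>\<sigma>. \<sigma> permutes {..<n} \<and>
     (\<forall>i<n. \<forall>j<n. g i j = (if \<sigma> i = j then 1 else 0)))"

definition venkov_reduced :: "nat \<Rightarrow> (nat \<Rightarrow> nat \<Rightarrow> real) \<Rightarrow> bool" where
  "venkov_reduced n S \<longleftrightarrow> (\<forall>g. GL_Z n g \<longrightarrow> trace_n n S \<le> trace_n n (congr_n n g S))"

definition Zn :: "nat \<Rightarrow> (nat \<Rightarrow> int) set" where
  "Zn n = {v. \<forall>k\<ge>n. v k = 0}"

definition Z_basis :: "nat \<Rightarrow> (nat \<Rightarrow> nat \<Rightarrow> int) \<Rightarrow> bool" where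
  "Z_basis n b \<longleftrightarrow> (\<forall>i<n. b i \<in> Zn n) \<and>
     (\<forall>v\<in>Zn n. \<exists>!c. (\<forall>i\<ge>n. c i = 0) \<and> v = (\<lambda>k. \<Sum>i<n. c i * b i k))"

definition primitive :: "nat \<Rightarrow> (nat \<Rightarrow> int) list \<Rightarrow> bool" where
  "primitive n vs \<longleftrightarrow> (\<exists>b. Z_basis n b \<and> (\<forall>i<length vs. b i = vs ! i))"

definition unit_vec :: "nat \<Rightarrow> nat \<Rightarrow> int" where
  "unit_vec i = (\<lambda>k. if k = i then 1 else 0)"

definition minkowski_reduced :: "nat \<Rightarrow> (nat \<Rightarrow> nat \<Rightarrow> real) \<Rightarrow> bool" where
  "minkowski_reduced n S \<longleftrightarrow> (\<forall>i<n.
     (let Q = {qform n S (\<lambda>k. real_of_int (v k)) | v. v \<in> Zn n \<and>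
                 primitive n (map unit_vec [0..<i] @ [v])}
      in S i i \<in> Q \<and> (\<forall>x\<in>Q. S i i \<le> x)))"

end

theory Submission
  imports Defs "HOL-Library.Function_Algebras"
begin


definition ev :: "nat \<Rightarrow> nat \<Rightarrow> real" where "ev k = (\<lambda>l. if l = k then 1 else 0)"

lemma qform_unit: "k < n \<Longrightarrow> qform n S (ev k) = S k k"
  unfolding qform_def ev_def
  by (simp add: if_distrib[of "\<lambda>x. x * _"] if_distrib[of "\<lambda>x. _ * x"] cong: if_cong)


lemma trace_congr: "trace_n n (congr_n n g S) = (\<Sum>j<n. qform n S (g j))"
  unfolding trace_n_def congr_n_def mat_mult_n_def transpose_n_def qform_def
  apply (rule sum.cong[OF refl])
  apply (simp add: sum_distrib_right)
  apply (rule sum.swap)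
  done

lemma qform_scale: "qform n S (\<lambda>l. c * v l) = c^2 * qform n S v"
  unfolding qform_def by (simp add: sum_distrib_left power2_eq_square mult_ac)

lemma qform_add_scaled: "qform n S (\<lambda>l. u l + t * w l) = qform n S u
   + t * (\<Sum>i<n. \<Sum>j<n. u i * S i j * w j + w i * S i j * u j) + t^2 * qform n S w"
  unfolding qform_def by (simp add: algebra_simps sum.distrib sum_distrib_left power2_eq_square)

lemma quad_avg:
  fixes A L C f a :: real
  assumes "0 \<le> C" "0 \<le> a" "a \<le> 1"
  shows "min (A + f * L + f^2 * C) (A + (f+1) * L + (f+1)^2 * C) \<le> (A + (f+a) * L + (f+a)^2 * C) + C / 4"
proof -
  have avg: "(1-a) * (A + f * L + f^2 * C) + a * (A + (f+1) * L + (f+1)^2 * C)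
      = (A + (f+a) * L + (f+a)^2 * C) + C * (a * (1 - a))"
    by (simp add: algebra_simps power2_eq_square)
  have e: "a * (1 - a) = 1/4 - (a - 1/2)^2" by (simp add: algebra_simps power2_eq_square)
  have "a * (1 - a) \<le> 1/4" unfolding e using zero_le_power2[of "a - 1/2"] by linarith
  hence c: "C * (a * (1 - a)) \<le> C / 4" using assms(1) by (simp add: mult_left_mono[of _ "1/4" C, simplified])
  let ?m = "min (A + f * L + f^2 * C) (A + (f+1) * L + (f+1)^2 * C)"
  have "?m = (1-a) * ?m + a * ?m" by (simp add: algebra_simps)
  also have "\<dots> \<le> (1-a) * (A + f * L + f^2 * C) + a * (A + (f+1) * L + (f+1)^2 * C)"
    using assms by (intro add_mono mult_left_mono) auto
  finally show ?thesis using avg c by linarith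
qed

lemma round_step:
  assumes "j < n" "0 \<le> S j j"
  shows "\<exists>m::int. qform n S (u(j := real_of_int m)) \<le> qform n S u + S j j / 4"
proof -
  define w where "w = u(j := 0)"
  have rep: "u(j := t) = (\<lambda>l. w l + t * ev j l)" for t
    by (auto simp: w_def ev_def)
  define L where "L = (\<Sum>i<n. \<Sum>k<n. w i * S i k * ev j k + ev j i * S i k * w k)"
  have Q: "qform n S (u(j := t)) = qform n S w + t * L + t^2 * S j j" for t
    unfolding rep qform_add_scaled L_def qform_unit[OF assms(1)] by simp
  define f where "f = real_of_int (floor (u j))"
  define a where "a = u j - f"
  have a: "0 \<le> a" "a \<le> 1" unfolding a_def f_def by linarith+
  have uu: "u = u(j := f + a)" unfolding a_def by simp
  have "min (qform n S (u(j := f))) (qform n S (u(j := f + 1))) \<le> qform n S u + S j j / 4"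
    apply (subst (3) uu) unfolding Q using quad_avg[OF assms(2) a] by simp
  then show ?thesis unfolding f_def
    by (metis min_le_iff_disj of_int_1 of_int_add)
qed

lemma round_iter:
  assumes "m \<le> n" "\<forall>j<n. 0 \<le> S j j"
  shows "\<exists>z. (\<forall>j<m. z j \<in> \<int>) \<and> (\<forall>j. m \<le> j \<longrightarrow> z j = u j) \<and>
           qform n S z \<le> qform n S u + (\<Sum>j<m. S j j) / 4"
  using assms(1)
proof (induction m)
  case 0
  then show ?case by (intro exI[of _ u]) auto
next
  case (Suc m)
  then obtain z where z: "\<forall>j<m. z j \<in> \<int>" "\<forall>j. m \<le> j \<longrightarrow> z j = u j"
     "qform n S z \<le> qform n S u + (\<Sum>j<m. S j j) / 4" by auto
  have "m < n" using Suc by auto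
  then obtain k :: int where k: "qform n S (z(m := real_of_int k)) \<le> qform n S z + S m m / 4"
    using round_step[of m n S z] assms(2) by auto
  have q: "qform n S (z(m := real_of_int k)) \<le> qform n S u + (\<Sum>j<Suc m. S j j) / 4"
    using z(3) k by (simp add: add_divide_distrib)
  show ?case
    apply (rule exI[of _ "z(m := real_of_int k)"])
    using z q by (intro conjI allI impI; simp add: less_Suc_eq del: fun_upd_apply; auto)
qed


definition Uprop :: "nat \<Rightarrow> (nat \<Rightarrow> nat \<Rightarrow> real) \<Rightarrow> bool" where
  "Uprop n S \<longleftrightarrow> (\<forall>z d. (\<forall>l<n. z l \<in> \<int>) \<longrightarrow> d < n \<longrightarrow> z d = 1 \<longrightarrow>
      (\<forall>l. d < l \<longrightarrow> l < n \<longrightarrow> z l = 0) \<longrightarrow> S d d \<le> qform n S z)"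

definition Pprop :: "nat \<Rightarrow> (nat \<Rightarrow> nat \<Rightarrow> real) \<Rightarrow> bool" where
  "Pprop n S \<longleftrightarrow> (\<forall>x d. (\<forall>l<n. x l \<in> \<int>) \<longrightarrow> d < n \<longrightarrow> x d \<noteq> 0 \<longrightarrow>
      (\<forall>l. d < l \<longrightarrow> l < n \<longrightarrow> x l = 0) \<longrightarrow> S d d \<le> qform n S x)"

definition sorted_diag :: "nat \<Rightarrow> (nat \<Rightarrow> nat \<Rightarrow> real) \<Rightarrow> bool" where
  "sorted_diag n S \<longleftrightarrow> (\<forall>a b. a \<le> b \<longrightarrow> b < n \<longrightarrow> S a a \<le> S b b)"

lemma U_imp_P:
  assumes n4: "n \<le> 4" and U: "Uprop n S" and srt: "sorted_diag n S" and pos: "\<forall>j<n. 0 \<le> S j j"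
  shows "Pprop n S"
  unfolding Pprop_def
proof (intro allI impI)
  fix x :: "nat \<Rightarrow> real" and d
  assume xi: "\<forall>l<n. x l \<in> \<int>" and dn: "d < n" and xd: "x d \<noteq> 0"
    and xz: "\<forall>l. d < l \<longrightarrow> l < n \<longrightarrow> x l = 0"
  define c where "c = x d"
  have cZ: "c \<in> \<int>" using xi dn c_def by auto
  then obtain ci where ci: "c = real_of_int ci" by (auto elim: Ints_cases)
  have c0: "c \<noteq> 0" using xd c_def by simp
  define v where "v = (\<lambda>l. x l / c)"
  have xv: "x = (\<lambda>l. c * v l)" using c0 by (auto simp: v_def)
  have qx: "qform n S x = c^2 * qform n S v" by (subst xv) (rule qform_scale)
  have vd: "v d = 1" using c0 by (simp add: v_def c_def)
  have vz: "\<forall>l. d < l \<longrightarrow> l < n \<longrightarrow> v l = 0" using xz by (simp add: v_def)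
  have Sd: "0 \<le> S d d" using pos dn by auto
  show "S d d \<le> qform n S x"
  proof (cases "\<bar>ci\<bar> = 1")
    case True
    hence cc: "c = 1 \<or> c = -1" using ci by (auto simp: abs_if split: if_splits)
    hence c2: "c^2 = 1" by auto
    have "v = (\<lambda>l. c * x l)" using cc by (auto simp: v_def)
    hence "\<forall>l<n. v l \<in> \<int>" using xi cZ by auto
    hence "S d d \<le> qform n S v" using U dn vd vz unfolding Uprop_def by blast
    then show ?thesis using qx c2 by simp
  next
    case False
    hence "\<bar>ci\<bar> \<ge> 2" using c0 ci by (cases "ci = 0") auto
    hence "\<bar>c\<bar> \<ge> 2" using ci by linarith
    hence c4: "c^2 \<ge> 4"
      using power_mono[of 2 "\<bar>c\<bar>" 2] by simp
    obtain z where z: "\<forall>j<d. z j \<in> \<int>" "\<forall>j. d \<le> j \<longrightarrow> z j = v j"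
        "qform n S z \<le> qform n S v + (\<Sum>j<d. S j j) / 4"
      using round_iter[of d n S v] dn pos by auto
    have zi: "\<forall>l<n. z l \<in> \<int>"
    proof (intro allI impI)
      fix l assume "l < n"
      show "z l \<in> \<int>"
      proof (cases "l < d")
        case True then show ?thesis using z by auto
      next
        case False
        then show ?thesis using z(2) vd vz \<open>l < n\<close> by (cases "l = d") auto
      qed
    qed
    have "S d d \<le> qform n S z" using U dn zi z(2) vd vz unfolding Uprop_def by auto
    moreover have "(\<Sum>j<d. S j j) \<le> (\<Sum>j<d. S d d)"
      using srt dn unfolding sorted_diag_def by (intro sum_mono) auto
    moreover have "(\<Sum>j<d. S d d) \<le> 3 * S d d"
    proof -
      have "real d \<le> 3" using dn n4 by simp
      then have "real d * S d d \<le> 3 * S d d" using Sd by (rule mult_right_mono)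
      then show ?thesis by simp
    qed
    ultimately have "S d d / 4 \<le> qform n S v" using z(3) by linarith
    hence "4 * (S d d / 4) \<le> c^2 * qform n S v"
      using c4 Sd by (intro mult_mono) auto
    then show ?thesis using qx by simp
  qed
qed

lemma comb_sum:
  fixes f :: "nat \<Rightarrow> nat" and D :: "nat \<Rightarrow> real"
  assumes "finite A" "card A = m" "\<forall>j\<in>A. f j < m" "\<forall>k. card {j\<in>A. f j < k} \<le> k"
    "\<forall>a b. a \<le> b \<longrightarrow> b < m \<longrightarrow> D a \<le> D b"
  shows "(\<Sum>k<m. D k) \<le> (\<Sum>j\<in>A. D (f j))"
  using assms
proof (induction m arbitrary: A f)
  case 0
  then show ?case by simp
next
  case (Suc m)
  have "\<exists>j0\<in>A. f j0 = m"
  proof (rule ccontr)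
    assume "\<not> ?thesis"
    hence "{j\<in>A. f j < m} = A" using Suc.prems(3) by (auto simp: less_Suc_eq)
    hence "card A \<le> m" using Suc.prems(4) by metis
    then show False using Suc.prems(2) by simp
  qed
  then obtain j0 where j0: "j0 \<in> A" "f j0 = m" by blast
  define A' where "A' = A - {j0}"
  define f' where "f' = (\<lambda>j. min (f j) (m - 1))"
  have fA': "finite A'" using Suc.prems(1) by (simp add: A'_def)
  have cA': "card A' = m" using Suc.prems(1,2) j0(1) by (simp add: A'_def)
  have r1: "\<forall>j\<in>A'. f' j < m"
  proof
    fix j assume "j \<in> A'"
    hence "m > 0" using cA' fA' by (metis card_gt_0_iff empty_iff)
    then show "f' j < m" by (simp add: f'_def)
  qed
  have r2: "\<forall>k. card {j\<in>A'. f' j < k} \<le> k"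
  proof
    fix k
    show "card {j\<in>A'. f' j < k} \<le> k"
    proof (cases "k < m")
      case True
      have "{j\<in>A'. f' j < k} \<subseteq> {j\<in>A. f j < k}" using True by (auto simp: A'_def f'_def)
      hence "card {j\<in>A'. f' j < k} \<le> card {j\<in>A. f j < k}"
        using Suc.prems(1) by (intro card_mono) auto
      then show ?thesis using Suc.prems(4) by (meson le_trans)
    next
      case False
      have "card {j\<in>A'. f' j < k} \<le> card A'" using fA' by (intro card_mono) auto
      then show ?thesis using cA' False by simp
    qed
  qed
  have r3: "\<forall>a b. a \<le> b \<longrightarrow> b < m \<longrightarrow> D a \<le> D b" using Suc.prems(5) by auto
  have IH: "(\<Sum>k<m. D k) \<le> (\<Sum>j\<in>A'. D (f' j))" using Suc.IH[OF fA' cA' r1 r2 r3] .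
  also have "\<dots> \<le> (\<Sum>j\<in>A'. D (f j))"
  proof (rule sum_mono)
    fix j assume "j \<in> A'"
    hence "f j < Suc m" using Suc.prems(3) by (auto simp: A'_def)
    then show "D (f' j) \<le> D (f j)" using Suc.prems(5) by (simp add: f'_def)
  qed
  finally have "(\<Sum>k<Suc m. D k) \<le> D m + (\<Sum>j\<in>A'. D (f j))" by simp
  also have "\<dots> = (\<Sum>j\<in>A. D (f j))"
    using sum.remove[OF Suc.prems(1) j0(1), of "\<lambda>j. D (f j)"] j0(2) by (simp add: A'_def)
  finally show ?case .
qed

interpretation fvs: vector_space "(\<lambda>(c::real) (f::nat\<Rightarrow>real) x. c * f x)"
  by unfold_locales (auto simp: fun_eq_iff algebra_simps)

lemma sum_fun_apply': "finite A \<Longrightarrow> (\<Sum>l\<in>A. (F l :: nat \<Rightarrow> real)) m = (\<Sum>l\<in>A. F l m)"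
  by (induction A rule: finite_induct) auto

lemma count_rows:
  assumes "GL_Z n g"
  shows "card {j. j < n \<and> (\<forall>l. k \<le> l \<longrightarrow> l < n \<longrightarrow> g j l = 0)} \<le> k"
proof (cases "k \<le> n")
  case False
  have "card {j. j < n \<and> (\<forall>l. k \<le> l \<longrightarrow> l < n \<longrightarrow> g j l = 0)} \<le> card {..<n}"
    by (intro card_mono) auto
  then show ?thesis using False by simp
next
  case kn: True
  obtain h where h: "is_identity_n n (mat_mult_n n g h)"
    using assms unfolding GL_Z_def by auto
  define J where "J = {j. j < n \<and> (\<forall>l. k \<le> l \<longrightarrow> l < n \<longrightarrow> g j l = 0)}"
  define hv where "hv = (\<lambda>l m. if m < n then h l m else (0::real))"
  have fJ: "finite J" by (simp add: J_def)
  have repr: "ev j = (\<Sum>l<k. (\<lambda>x. g j l * hv l x))" if "j \<in> J" for j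
  proof
    fix m
    have jn: "j < n" using that by (simp add: J_def)
    have gz: "\<forall>l. k \<le> l \<longrightarrow> l < n \<longrightarrow> g j l = 0" using that by (simp add: J_def)
    show "ev j m = (\<Sum>l<k. (\<lambda>x. g j l * hv l x)) m"
    proof (cases "m < n")
      case True
      have "(\<Sum>l<n. g j l * h l m) = (\<Sum>l<k. g j l * h l m)"
      proof -
        have "(\<Sum>l<n. g j l * h l m) = (\<Sum>l<k. g j l * h l m) + (\<Sum>l\<in>{k..<n}. g j l * h l m)"
          using sum.atLeastLessThan_concat[of 0 k n "\<lambda>l. g j l * h l m"] kn by (simp add: atLeast0LessThan)
        also have "(\<Sum>l\<in>{k..<n}. g j l * h l m) = 0" using gz by (intro sum.neutral) auto
        finally show ?thesis by simp
      qed
      moreover have "(\<Sum>l<n. g j l * h l m) = (if j = m then 1 else 0)"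
        using h jn True unfolding is_identity_n_def mat_mult_n_def by auto
      ultimately show ?thesis using True
        by (simp add: sum_fun_apply' ev_def hv_def eq_commute)
    next
      case False
      then show ?thesis using jn by (simp add: sum_fun_apply' ev_def hv_def)
    qed
  qed
  have span: "ev ` J \<subseteq> fvs.span (hv ` {..<k})"
  proof
    fix v assume "v \<in> ev ` J"
    then obtain j where j: "j \<in> J" "v = ev j" by auto
    have "(\<Sum>l<k. (\<lambda>x. g j l * hv l x)) \<in> fvs.span (hv ` {..<k})"
      by (intro fvs.span_sum fvs.span_scale fvs.span_base) auto
    then show "v \<in> fvs.span (hv ` {..<k})" using repr[OF j(1)] j(2) by simp
  qed
  have evj: "ev j j' = (if j = j' then 1 else 0)" for j j' by (simp add: ev_def)
  have inj: "inj_on ev J"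
  proof (rule inj_onI)
    fix a b assume "ev a = ev b"
    hence "ev a a = ev b a" by simp
    then show "a = b" by (simp add: ev_def split: if_splits)
  qed
  have ind: "fvs.independent (ev ` J)"
  proof (rule fvs.independent_if_scalars_zero)
    show "finite (ev ` J)" using fJ by simp
    fix c v
    assume s: "(\<Sum>v\<in>ev ` J. (\<lambda>x. c v * v x)) = 0" and v: "v \<in> ev ` J"
    then obtain j where j: "j \<in> J" "v = ev j" by auto
    have "0 = (\<Sum>w\<in>ev ` J. (\<lambda>x. c w * w x)) j" using s by simp
    also have "\<dots> = (\<Sum>w\<in>ev ` J. c w * w j)" using fJ by (simp add: sum_fun_apply')
    also have "\<dots> = (\<Sum>w\<in>ev ` J. if w = ev j then c w else 0)"
    proof (rule sum.cong[OF refl])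
      fix w assume "w \<in> ev ` J"
      then obtain i where "w = ev i" by auto
      then show "c w * w j = (if w = ev j then c w else 0)"
      proof (cases "i = j")
        case False
        have "w \<noteq> ev j"
        proof
          assume "w = ev j"
          hence "ev i j = ev j j" using \<open>w = ev i\<close> by simp
          thus False using False by (simp add: evj)
        qed
        then show ?thesis using \<open>w = ev i\<close> False by (simp add: evj)
      qed (simp add: evj)
    qed
    also have "\<dots> = c (ev j)" using fJ j(1) by (simp add: sum.delta')
    finally show "c v = 0" using j by simp
  qed
  have "card (ev ` J) \<le> card (hv ` {..<k})"
    using fvs.independent_span_bound[OF _ ind span] by simp
  also have "\<dots> \<le> k" using card_image_le[of "{..<k}" hv] by simp
  finally show ?thesis using card_image[OF inj] by (simp add: J_def)
qed


lemma P_imp_venkov: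
  assumes P: "Pprop n S" and srt: "sorted_diag n S"
  shows "venkov_reduced n S"
  unfolding venkov_reduced_def
proof (intro allI impI)
  fix g assume GL: "GL_Z n g"
  obtain h where h: "is_identity_n n (mat_mult_n n g h)"
    using GL unfolding GL_Z_def by auto
  have gi: "\<forall>l<n. g j l \<in> \<int>" if "j < n" for j
    using GL that unfolding GL_Z_def int_matrix_n_def by auto
  have nz: "{l. l < n \<and> g j l \<noteq> 0} \<noteq> {}" if "j < n" for j
  proof
    assume e: "{l. l < n \<and> g j l \<noteq> 0} = {}"
    have "(\<Sum>l<n. g j l * h l j) = 1" using h that unfolding is_identity_n_def mat_mult_n_def by auto
    moreover have "(\<Sum>l<n. g j l * h l j) = 0" using e by (intro sum.neutral) auto
    ultimately show False by simp
  qed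
  define dep where "dep j = Max {l. l < n \<and> g j l \<noteq> 0}" for j
  have dep: "dep j < n \<and> g j (dep j) \<noteq> 0 \<and> (\<forall>l. dep j < l \<longrightarrow> l < n \<longrightarrow> g j l = 0)" if "j < n" for j
  proof -
    have fin: "finite {l. l < n \<and> g j l \<noteq> 0}" by simp
    have "dep j \<in> {l. l < n \<and> g j l \<noteq> 0}" unfolding dep_def using Max_in[OF fin nz[OF that]] .
    moreover have "\<forall>l. dep j < l \<longrightarrow> l < n \<longrightarrow> g j l = 0"
    proof (intro allI impI)
      fix l assume "dep j < l" "l < n"
      show "g j l = 0"
      proof (rule ccontr)
        assume "g j l \<noteq> 0"
        hence "l \<le> dep j" unfolding dep_def using Max_ge[OF fin] \<open>l < n\<close> by blast
        thus False using \<open>dep j < l\<close> by simp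
      qed
    qed
    ultimately show ?thesis by auto
  qed
  have q: "S (dep j) (dep j) \<le> qform n S (g j)" if "j < n" for j
    using P gi[OF that] dep[OF that] unfolding Pprop_def by blast
  have cnt: "\<forall>k. card {j\<in>{..<n}. dep j < k} \<le> k"
  proof
    fix k
    have "{j\<in>{..<n}. dep j < k} \<subseteq> {j. j < n \<and> (\<forall>l. k \<le> l \<longrightarrow> l < n \<longrightarrow> g j l = 0)}"
    proof (intro subsetI CollectI conjI allI impI)
      fix j l assume j: "j \<in> {j\<in>{..<n}. dep j < k}" and l: "k \<le> l" "l < n"
      then have "j < n" "dep j < l" by auto
      then show "g j l = 0" using dep l by blast
    next
      fix j assume "j \<in> {j\<in>{..<n}. dep j < k}" then show "j < n" by auto
    qed
    hence "card {j\<in>{..<n}. dep j < k} \<le> card {j. j < n \<and> (\<forall>l. k \<le> l \<longrightarrow> l < n \<longrightarrow> g j l = 0)}"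
      by (intro card_mono) auto
    then show "card {j\<in>{..<n}. dep j < k} \<le> k" using count_rows[OF GL, of k] by linarith
  qed
  have "(\<Sum>k<n. S k k) \<le> (\<Sum>j\<in>{..<n}. S (dep j) (dep j))"
  proof (rule comb_sum)
    show "\<forall>j\<in>{..<n}. dep j < n" using dep by blast
    show "\<forall>a b. a \<le> b \<longrightarrow> b < n \<longrightarrow> S a a \<le> S b b" using srt unfolding sorted_diag_def by blast
  qed (use cnt in auto)
  also have "\<dots> \<le> (\<Sum>j<n. qform n S (g j))" using q by (intro sum_mono) auto
  finally show "trace_n n S \<le> trace_n n (congr_n n g S)"
    unfolding trace_congr by (simp add: trace_n_def)
qed



lemma basis_sum_formula:
  fixes c :: "nat \<Rightarrow> int" and v :: "nat \<Rightarrow> int"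
  assumes "i < n" "m < n"
  defines "b \<equiv> (\<lambda>k. if k = i then v else if k = m then unit_vec i else unit_vec k)"
  shows "(\<Sum>k<n. c k * b k l) = c i * v l + (if m \<noteq> i \<and> l = i then c m else 0)
           + (if l < n \<and> l \<noteq> i \<and> l \<noteq> m then c l else 0)"
proof -
  have "(\<Sum>k<n. c k * b k l) = c i * b i l + (\<Sum>k\<in>{..<n}-{i}. c k * b k l)"
    using assms(1) by (simp add: sum.remove)
  also have "c i * b i l = c i * v l" by (simp add: b_def)
  also have "(\<Sum>k\<in>{..<n}-{i}. c k * b k l) = (if m \<noteq> i \<and> l = i then c m else 0)
           + (if l < n \<and> l \<noteq> i \<and> l \<noteq> m then c l else 0)"
  proof (cases "m = i")
    case True
    have "(\<Sum>k\<in>{..<n}-{i}. c k * b k l) = (\<Sum>k\<in>{..<n}-{i}. if k = l then c k else 0)"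
      using True by (intro sum.cong) (auto simp: b_def unit_vec_def)
    also have "\<dots> = (if l \<in> {..<n}-{i} then c l else 0)" by (rule sum.delta) simp
    finally show ?thesis using True by auto
  next
    case False
    have mm: "m \<in> {..<n}-{i}" using False assms(2) by auto
    have "(\<Sum>k\<in>{..<n}-{i}. c k * b k l) = c m * b m l + (\<Sum>k\<in>{..<n}-{i}-{m}. c k * b k l)"
      using sum.remove[OF _ mm] by simp
    also have "c m * b m l = (if l = i then c m else 0)" using False by (simp add: b_def unit_vec_def)
    also have "(\<Sum>k\<in>{..<n}-{i}-{m}. c k * b k l) = (\<Sum>k\<in>{..<n}-{i}-{m}. if k = l then c k else 0)"
      by (intro sum.cong) (auto simp: b_def unit_vec_def)
    also have "\<dots> = (if l \<in> {..<n}-{i}-{m} then c l else 0)" by (rule sum.delta) simp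
    finally show ?thesis using False by auto
  qed
  finally show ?thesis by simp
qed

lemma prim_lemma:
  assumes v: "v \<in> Zn n" and i: "i < n" and m: "m < n" "i \<le> m" and vm: "v m = 1"
  shows "primitive n (map unit_vec [0..<i] @ [v])"
proof -
  define b where "b = (\<lambda>k. if k = i then v else if k = m then unit_vec i else unit_vec k)"
  have F: "(\<Sum>k<n. c k * b k l) = c i * v l + (if m \<noteq> i \<and> l = i then c m else 0)
           + (if l < n \<and> l \<noteq> i \<and> l \<noteq> m then c l else 0)" for c l
    unfolding b_def by (rule basis_sum_formula[OF i m(1)])
  have vz: "v l = 0" if "n \<le> l" for l using v that by (simp add: Zn_def)
  have Zb: "Z_basis n b"
    unfolding Z_basis_def
  proof (intro conjI ballI allI impI)
    fix k assume "k < n"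
    then show "b k \<in> Zn n" using v i by (auto simp: b_def Zn_def unit_vec_def)
  next
    fix w assume w: "w \<in> Zn n"
    have wz: "w l = 0" if "n \<le> l" for l using w that by (simp add: Zn_def)
    define c0 where "c0 = (\<lambda>k. if n \<le> k then 0 else if k = i then w m
                         else if k = m then w i - w m * v i else w k - w m * v k)"
    show "\<exists>!c. (\<forall>k\<ge>n. c k = 0) \<and> w = (\<lambda>l. \<Sum>k<n. c k * b k l)"
    proof (rule ex1I[of _ c0])
      show "(\<forall>k\<ge>n. c0 k = 0) \<and> w = (\<lambda>l. \<Sum>k<n. c0 k * b k l)"
      proof (intro conjI allI impI ext)
        fix k assume "n \<le> k" then show "c0 k = 0" by (simp add: c0_def)
      next
        fix l
        show "w l = (\<Sum>k<n. c0 k * b k l)"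
          unfolding F using i m vm wz vz by (auto simp: c0_def not_le)
      qed
    next
      fix c assume c: "(\<forall>k\<ge>n. c k = 0) \<and> w = (\<lambda>l. \<Sum>k<n. c k * b k l)"
      have wl: "w l = c i * v l + (if m \<noteq> i \<and> l = i then c m else 0)
           + (if l < n \<and> l \<noteq> i \<and> l \<noteq> m then c l else 0)" for l
        using c F by auto
      have ci: "c i = w m" using wl[of m] vm by simp
      show "c = c0"
      proof
        fix k
        show "c k = c0 k"
        proof (cases "n \<le> k")
          case True then show ?thesis using c by (simp add: c0_def)
        next
          case False
          then show ?thesis using wl[of k] wl[of i] ci i by (auto simp: c0_def)
        qed
      qed
    qed
  qed
  moreover have "\<forall>k<length (map unit_vec [0..<i] @ [v]). b k = (map unit_vec [0..<i] @ [v]) ! k"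
  proof (intro allI impI)
    fix k assume "k < length (map unit_vec [0..<i] @ [v])"
    hence "k \<le> i" by simp
    then show "b k = (map unit_vec [0..<i] @ [v]) ! k"
      using m(2) by (cases "k = i") (auto simp: b_def nth_append)
  qed
  ultimately show ?thesis unfolding primitive_def by blast
qed

lemma prim_nonzero:
  assumes p: "primitive n (map unit_vec [0..<i] @ [v])" and i: "i < n" and v: "v \<in> Zn n"
  shows "\<exists>l. i \<le> l \<and> l < n \<and> v l \<noteq> 0"
proof (rule ccontr)
  assume "\<not> ?thesis"
  hence vz: "\<forall>l. i \<le> l \<longrightarrow> l < n \<longrightarrow> v l = 0" by auto
  have vz2: "v l = 0" if "n \<le> l" for l using v that by (simp add: Zn_def)
  obtain b where Zb: "Z_basis n b" and bl: "\<forall>k<length (map unit_vec [0..<i] @ [v]). b k = (map unit_vec [0..<i] @ [v]) ! k"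
    using p unfolding primitive_def by blast
  have bk: "b k = unit_vec k" if "k < i" for k using bl that by (auto simp: nth_append)
  have bi: "b i = v" using bl by (auto simp: nth_append)
  define c1 where "c1 = (\<lambda>k. if k = i then (1::int) else 0)"
  define c2 where "c2 = (\<lambda>k. if k < i then v k else 0)"
  have e1: "(\<forall>k\<ge>n. c1 k = 0) \<and> v = (\<lambda>l. \<Sum>k<n. c1 k * b k l)"
  proof (intro conjI allI impI ext)
    fix k assume "n \<le> k" then show "c1 k = 0" using i by (simp add: c1_def)
  next
    fix l
    have "(\<Sum>k<n. c1 k * b k l) = (\<Sum>k<n. if k = i then b k l else 0)"
      by (intro sum.cong) (auto simp: c1_def)
    also have "\<dots> = b i l" using i by (simp add: sum.delta')
    finally show "v l = (\<Sum>k<n. c1 k * b k l)" using bi by simp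
  qed
  have e2: "(\<forall>k\<ge>n. c2 k = 0) \<and> v = (\<lambda>l. \<Sum>k<n. c2 k * b k l)"
  proof (intro conjI allI impI ext)
    fix k assume "n \<le> k" then show "c2 k = 0" using i by (simp add: c2_def)
  next
    fix l
    have "(\<Sum>k<n. c2 k * b k l) = (\<Sum>k<n. if k = l \<and> k < i then v k else 0)"
      by (intro sum.cong) (auto simp: c2_def bk unit_vec_def)
    also have "\<dots> = v l"
    proof (cases "l < i")
      case True
      have "(\<Sum>k<n. if k = l \<and> k < i then v k else 0) = (\<Sum>k<n. if k = l then v k else 0)"
        using True by (intro sum.cong) auto
      also have "\<dots> = v l" using True i by (simp add: sum.delta)
      finally show ?thesis .
    next
      case False
      have "(\<Sum>k<n. if k = l \<and> k < i then v k else 0) = 0"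
        using False by (intro sum.neutral) auto
      moreover have "v l = 0" using False vz vz2 by (cases "l < n") auto
      ultimately show ?thesis by simp
    qed
    finally show "v l = (\<Sum>k<n. c2 k * b k l)" by simp
  qed
  have "v \<in> Zn n" by (rule v)
  then have "\<exists>!c. (\<forall>k\<ge>n. c k = 0) \<and> v = (\<lambda>l. \<Sum>k<n. c k * b k l)"
    using Zb unfolding Z_basis_def by blast
  hence "c1 = c2" using e1 e2 by blast
  hence "c1 i = c2 i" by simp
  then show False by (simp add: c1_def c2_def)
qed



lemma qform_cong: "(\<And>l. l < n \<Longrightarrow> x l = y l) \<Longrightarrow> qform n S x = qform n S y"
  unfolding qform_def by (intro sum.cong) auto

lemma unit_vec_real: "(\<lambda>k. real_of_int (unit_vec i k)) = ev i"
  by (auto simp: unit_vec_def ev_def)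

lemma unit_vec_Zn: "i < n \<Longrightarrow> unit_vec i \<in> Zn n"
  by (auto simp: unit_vec_def Zn_def)

lemma P_imp_mink:
  assumes P: "Pprop n S" and srt: "sorted_diag n S"
  shows "minkowski_reduced n S"
  unfolding minkowski_reduced_def Let_def
proof (intro allI impI conjI ballI)
  fix i assume i: "i < n"
  have "primitive n (map unit_vec [0..<i] @ [unit_vec i])"
    using prim_lemma[OF unit_vec_Zn[OF i] i i] by (simp add: unit_vec_def)
  moreover have "S i i = qform n S (\<lambda>k. real_of_int (unit_vec i k))"
    unfolding unit_vec_real qform_unit[OF i] ..
  ultimately show "S i i \<in> {qform n S (\<lambda>k. real_of_int (v k)) |v. v \<in> Zn n \<and> primitive n (map unit_vec [0..<i] @ [v])}"
    using unit_vec_Zn[OF i] by blast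
next
  fix i x assume i: "i < n"
    and "x \<in> {qform n S (\<lambda>k. real_of_int (v k)) |v. v \<in> Zn n \<and> primitive n (map unit_vec [0..<i] @ [v])}"
  then obtain v where x: "x = qform n S (\<lambda>k. real_of_int (v k))" and v: "v \<in> Zn n"
    and p: "primitive n (map unit_vec [0..<i] @ [v])" by blast
  obtain l where l: "i \<le> l" "l < n" "v l \<noteq> 0" using prim_nonzero[OF p i v] by blast
  define d where "d = Max {l. l < n \<and> v l \<noteq> 0}"
  have fin: "finite {l. l < n \<and> v l \<noteq> 0}" by simp
  have "d \<in> {l. l < n \<and> v l \<noteq> 0}" unfolding d_def using Max_in[OF fin] l by blast
  hence d: "d < n" "v d \<noteq> 0" by auto
  have ld: "l \<le> d" unfolding d_def using Max_ge[OF fin] l by blast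
  have dz: "\<forall>l. d < l \<longrightarrow> l < n \<longrightarrow> real_of_int (v l) = 0"
  proof (intro allI impI)
    fix l' assume "d < l'" "l' < n"
    show "real_of_int (v l') = 0"
    proof (rule ccontr)
      assume "real_of_int (v l') \<noteq> 0"
      hence "l' \<le> d" unfolding d_def using Max_ge[OF fin] \<open>l' < n\<close> by simp
      thus False using \<open>d < l'\<close> by simp
    qed
  qed
  have "S d d \<le> x" unfolding x using P d dz unfolding Pprop_def by auto
  moreover have "S i i \<le> S d d" using srt d l ld unfolding sorted_diag_def by auto
  ultimately show "S i i \<le> x" by simp
qed

lemma mink_imp_U:
  assumes M: "minkowski_reduced n S"
  shows "Uprop n S"
  unfolding Uprop_def
proof (intro allI impI)
  fix z :: "nat \<Rightarrow> real" and d
  assume zi: "\<forall>l<n. z l \<in> \<int>" and d: "d < n" and zd: "z d = 1" and zz: "\<forall>l. d < l \<longrightarrow> l < n \<longrightarrow> z l = 0"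
  define v where "v = (\<lambda>l. if l < n then floor (z l) else 0)"
  have vZ: "v \<in> Zn n" by (simp add: v_def Zn_def)
  have vd: "v d = 1" using d zd by (simp add: v_def)
  have vr: "real_of_int (v l) = z l" if "l < n" for l using zi that by (simp add: v_def)
  have "primitive n (map unit_vec [0..<d] @ [v])" using prim_lemma[OF vZ d d] vd by simp
  then have "qform n S (\<lambda>k. real_of_int (v k)) \<in> {qform n S (\<lambda>k. real_of_int (v k)) |v. v \<in> Zn n \<and> primitive n (map unit_vec [0..<d] @ [v])}"
    using vZ by blast
  then have "S d d \<le> qform n S (\<lambda>k. real_of_int (v k))" using M d unfolding minkowski_reduced_def Let_def by blast
  also have "\<dots> = qform n S z" by (rule qform_cong) (rule vr)
  finally show "S d d \<le> qform n S z" .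
qed

lemma mink_imp_sorted:
  assumes M: "minkowski_reduced n S"
  shows "sorted_diag n S"
  unfolding sorted_diag_def
proof (intro allI impI)
  fix a b assume ab: "a \<le> b" "b < n"
  have a: "a < n" using ab by simp
  have "primitive n (map unit_vec [0..<a] @ [unit_vec b])"
    using prim_lemma[OF unit_vec_Zn[OF ab(2)] a ab(2) ab(1)] by (simp add: unit_vec_def)
  then have "qform n S (\<lambda>k. real_of_int (unit_vec b k)) \<in> {qform n S (\<lambda>k. real_of_int (v k)) |v. v \<in> Zn n \<and> primitive n (map unit_vec [0..<a] @ [v])}"
    using unit_vec_Zn[OF ab(2)] by blast
  then have "S a a \<le> qform n S (\<lambda>k. real_of_int (unit_vec b k))" using M a unfolding minkowski_reduced_def Let_def by blast
  also have "\<dots> = S b b" unfolding unit_vec_real qform_unit[OF ab(2)] ..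
  finally show "S a a \<le> S b b" .
qed



lemma sum_ev: "j < n \<Longrightarrow> d < n \<Longrightarrow> (\<Sum>k\<in>{..<n}-{d}. a k * ev k j) = (if j = d then 0 else a j)"
proof -
  assume j: "j < n" and d: "d < n"
  have "(\<Sum>k\<in>{..<n}-{d}. a k * ev k j) = (\<Sum>k\<in>{..<n}-{d}. if k = j then a k else 0)"
    by (intro sum.cong) (auto simp: ev_def)
  also have "\<dots> = (if j \<in> {..<n}-{d} then a j else 0)" by (rule sum.delta) simp
  finally show ?thesis using j by auto
qed

lemma venkov_imp_U:
  assumes V: "venkov_reduced n S"
  shows "Uprop n S"
  unfolding Uprop_def
proof (intro allI impI)
  fix z :: "nat \<Rightarrow> real" and d
  assume zi: "\<forall>l<n. z l \<in> \<int>" and d: "d < n" and zd: "z d = 1" and zz: "\<forall>l. d < l \<longrightarrow> l < n \<longrightarrow> z l = 0"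
  define g where "g = (\<lambda>k l. if k = d then z l else ev k l)"
  define h where "h = (\<lambda>k l. if k = d then (if l = d then 1 else - z l) else ev k l)"
  have gh: "is_identity_n n (mat_mult_n n g h)"
    unfolding is_identity_n_def mat_mult_n_def
  proof (intro allI impI)
    fix i j assume i: "i < n" and j: "j < n"
    show "(\<Sum>k<n. g i k * h k j) = (if i = j then 1 else 0)"
    proof (cases "i = d")
      case False
      have "(\<Sum>k<n. g i k * h k j) = (\<Sum>k<n. if k = i then h k j else 0)"
        using False by (intro sum.cong) (auto simp: g_def ev_def)
      also have "\<dots> = h i j" using i by (simp add: sum.delta)
      finally show ?thesis using False by (auto simp: h_def ev_def)
    next
      case True
      have "(\<Sum>k<n. g i k * h k j) = g i d * h d j + (\<Sum>k\<in>{..<n}-{d}. g i k * h k j)"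
        using d by (simp add: sum.remove)
      also have "(\<Sum>k\<in>{..<n}-{d}. g i k * h k j) = (\<Sum>k\<in>{..<n}-{d}. z k * ev k j)"
        using True by (intro sum.cong) (auto simp: g_def h_def)
      also have "\<dots> = (if j = d then 0 else z j)" by (rule sum_ev[OF j d])
      finally show ?thesis using True zd by (auto simp: g_def h_def)
    qed
  qed
  have hg: "is_identity_n n (mat_mult_n n h g)"
    unfolding is_identity_n_def mat_mult_n_def
  proof (intro allI impI)
    fix i j assume i: "i < n" and j: "j < n"
    show "(\<Sum>k<n. h i k * g k j) = (if i = j then 1 else 0)"
    proof (cases "i = d")
      case False
      have "(\<Sum>k<n. h i k * g k j) = (\<Sum>k<n. if k = i then g k j else 0)"
        using False by (intro sum.cong) (auto simp: h_def ev_def)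
      also have "\<dots> = g i j" using i by (simp add: sum.delta)
      finally show ?thesis using False by (auto simp: g_def ev_def)
    next
      case True
      have "(\<Sum>k<n. h i k * g k j) = h i d * g d j + (\<Sum>k\<in>{..<n}-{d}. h i k * g k j)"
        using d by (simp add: sum.remove)
      also have "(\<Sum>k\<in>{..<n}-{d}. h i k * g k j) = (\<Sum>k\<in>{..<n}-{d}. (- z k) * ev k j)"
        using True by (intro sum.cong) (auto simp: g_def h_def)
      also have "\<dots> = (if j = d then 0 else - z j)" by (rule sum_ev[OF j d])
      finally show ?thesis using True zd by (auto simp: g_def h_def)
    qed
  qed
  have gZ: "int_matrix_n n g" using zi unfolding int_matrix_n_def g_def ev_def by auto
  have hZ: "int_matrix_n n h" using zi unfolding int_matrix_n_def h_def ev_def by auto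
  have GL: "GL_Z n g" unfolding GL_Z_def using gZ hZ gh hg by blast
  have "trace_n n S \<le> trace_n n (congr_n n g S)" using V GL unfolding venkov_reduced_def by blast
  also have "trace_n n (congr_n n g S) = qform n S z + (\<Sum>k\<in>{..<n}-{d}. S k k)"
  proof -
    have "trace_n n (congr_n n g S) = (\<Sum>k<n. qform n S (g k))" by (rule trace_congr)
    also have "\<dots> = qform n S (g d) + (\<Sum>k\<in>{..<n}-{d}. qform n S (g k))" using d by (simp add: sum.remove)
    also have "(\<Sum>k\<in>{..<n}-{d}. qform n S (g k)) = (\<Sum>k\<in>{..<n}-{d}. S k k)"
      by (intro sum.cong) (auto simp: g_def qform_unit)
    finally show ?thesis by (simp add: g_def)
  qed
  also have "trace_n n S = S d d + (\<Sum>k\<in>{..<n}-{d}. S k k)"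
    unfolding trace_n_def using d by (simp add: sum.remove)
  finally show "S d d \<le> qform n S z" by simp
qed



lemma qform_perm:
  assumes s: "\<sigma> permutes {..<n}"
  shows "qform n (\<lambda>i j. S (\<sigma> i) (\<sigma> j)) x = qform n S (\<lambda>l. x (inv \<sigma> l))"
proof -
  define y where "y = (\<lambda>l. x (inv \<sigma> l))"
  have pr: "(\<Sum>j<n. F j) = (\<Sum>j<n. F (\<sigma> j))" for F :: "nat \<Rightarrow> real"
    using sum.permute[OF s, of F] by (simp add: o_def)
  have "qform n S y = (\<Sum>i<n. \<Sum>j<n. y (\<sigma> i) * S (\<sigma> i) j * y j)"
    unfolding qform_def by (rule pr)
  also have "\<dots> = (\<Sum>i<n. \<Sum>j<n. y (\<sigma> i) * S (\<sigma> i) (\<sigma> j) * y (\<sigma> j))"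
    by (intro sum.cong refl pr)
  finally have "qform n S (\<lambda>l. x (inv \<sigma> l)) = (\<Sum>i<n. \<Sum>j<n. x (inv \<sigma> (\<sigma> i)) * S (\<sigma> i) (\<sigma> j) * x (inv \<sigma> (\<sigma> j)))"
    unfolding y_def .
  also have "\<dots> = qform n (\<lambda>i j. S (\<sigma> i) (\<sigma> j)) x"
    unfolding qform_def permutes_inverses[OF s] ..
  finally show ?thesis ..
qed

lemma trace_perm:
  assumes s: "\<sigma> permutes {..<n}"
  shows "trace_n n (\<lambda>i j. S (\<sigma> i) (\<sigma> j)) = trace_n n S"
  unfolding trace_n_def using sum.permute[OF s, of "\<lambda>i. S i i"] by (simp add: o_def)

lemma venkov_perm:
  assumes V: "venkov_reduced n S" and s: "\<sigma> permutes {..<n}"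
  shows "venkov_reduced n (\<lambda>i j. S (\<sigma> i) (\<sigma> j))"
  unfolding venkov_reduced_def
proof (intro allI impI)
  fix g assume GL: "GL_Z n g"
  obtain h where gi: "int_matrix_n n g" and hi: "int_matrix_n n h"
    and gh: "is_identity_n n (mat_mult_n n g h)" and hg: "is_identity_n n (mat_mult_n n h g)"
    using GL unfolding GL_Z_def by blast
  define \<tau> where "\<tau> = inv \<sigma>"
  have t: "\<tau> permutes {..<n}" unfolding \<tau>_def by (rule permutes_inv[OF s])
  have tl: "\<tau> l < n" if "l < n" for l using permutes_in_image[OF t] that by simp
  have tinj: "\<tau> i = \<tau> j \<longleftrightarrow> i = j" for i j using permutes_inj[OF t] by (auto dest: injD)
  define g' where "g' = (\<lambda>j l. g j (\<tau> l))"
  define h' where "h' = (\<lambda>l m. h (\<tau> l) m)"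
  have GL': "GL_Z n g'"
    unfolding GL_Z_def
  proof (intro conjI exI[of _ h'])
    show "int_matrix_n n g'" using gi tl unfolding int_matrix_n_def g'_def by auto
    show "int_matrix_n n h'" using hi tl unfolding int_matrix_n_def h'_def by auto
    show "is_identity_n n (mat_mult_n n g' h')"
      unfolding is_identity_n_def mat_mult_n_def
    proof (intro allI impI)
      fix i j assume "i < n" "j < n"
      have "(\<Sum>k<n. g' i k * h' k j) = (\<Sum>k<n. g i k * h k j)"
        unfolding g'_def h'_def using sum.permute[OF t, of "\<lambda>k. g i k * h k j"] by (simp add: o_def)
      then show "(\<Sum>k<n. g' i k * h' k j) = (if i = j then 1 else 0)"
        using gh \<open>i < n\<close> \<open>j < n\<close> unfolding is_identity_n_def mat_mult_n_def by simp
    qed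
    show "is_identity_n n (mat_mult_n n h' g')"
      unfolding is_identity_n_def mat_mult_n_def
    proof (intro allI impI)
      fix i j assume "i < n" "j < n"
      have "(\<Sum>k<n. h' i k * g' k j) = (if \<tau> i = \<tau> j then 1 else 0)"
        unfolding g'_def h'_def using hg tl \<open>i < n\<close> \<open>j < n\<close> unfolding is_identity_n_def mat_mult_n_def by simp
      then show "(\<Sum>k<n. h' i k * g' k j) = (if i = j then 1 else 0)" using tinj by simp
    qed
  qed
  have "trace_n n (\<lambda>i j. S (\<sigma> i) (\<sigma> j)) = trace_n n S" by (rule trace_perm[OF s])
  also have "\<dots> \<le> trace_n n (congr_n n g' S)" using V GL' unfolding venkov_reduced_def by blast
  also have "\<dots> = (\<Sum>j<n. qform n S (g' j))" by (rule trace_congr)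
  also have "\<dots> = (\<Sum>j<n. qform n (\<lambda>i j. S (\<sigma> i) (\<sigma> j)) (g j))"
    unfolding qform_perm[OF s] g'_def \<tau>_def ..
  also have "\<dots> = trace_n n (congr_n n g (\<lambda>i j. S (\<sigma> i) (\<sigma> j)))" by (rule trace_congr[symmetric])
  finally show "trace_n n (\<lambda>i j. S (\<sigma> i) (\<sigma> j)) \<le> trace_n n (congr_n n g (\<lambda>i j. S (\<sigma> i) (\<sigma> j)))" .
qed

lemma qform_agree:
  assumes "\<forall>i<n. \<forall>j<n. S1 i j = S2 i j"
  shows "qform n S1 = qform n S2"
  using assms unfolding qform_def by (intro ext sum.cong refl) auto

lemma venkov_agree:
  assumes a: "\<forall>i<n. \<forall>j<n. S1 i j = S2 i j"
  shows "venkov_reduced n S1 = venkov_reduced n S2"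
proof -
  have "trace_n n S1 = trace_n n S2" using a unfolding trace_n_def by (intro sum.cong) auto
  moreover have "trace_n n (congr_n n g S1) = trace_n n (congr_n n g S2)" for g
    unfolding trace_congr qform_agree[OF a] ..
  ultimately show ?thesis unfolding venkov_reduced_def by simp
qed

lemma mink_agree:
  assumes a: "\<forall>i<n. \<forall>j<n. S1 i j = S2 i j"
  shows "minkowski_reduced n S1 = minkowski_reduced n S2"
  unfolding minkowski_reduced_def qform_agree[OF a]
  using a by (intro iff_allI) auto

lemma congr_perm:
  assumes g: "\<forall>i<n. \<forall>j<n. g i j = (if \<sigma> i = j then 1 else 0)" and s: "\<sigma> permutes {..<n}"
  shows "\<forall>i<n. \<forall>j<n. congr_n n g S i j = S (\<sigma> i) (\<sigma> j)"
proof (intro allI impI)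
  fix i j assume i: "i < n" and j: "j < n"
  have si: "\<sigma> i < n" "\<sigma> j < n" using permutes_in_image[OF s] i j by auto
  have inner: "(\<Sum>l<n. g i l * S l k) = S (\<sigma> i) k" for k
  proof -
    have "(\<Sum>l<n. g i l * S l k) = (\<Sum>l<n. if \<sigma> i = l then S l k else 0)"
      using g i by (intro sum.cong) auto
    also have "\<dots> = S (\<sigma> i) k" using si by (simp add: sum.delta)
    finally show ?thesis .
  qed
  have "congr_n n g S i j = (\<Sum>k<n. S (\<sigma> i) k * g j k)"
    unfolding congr_n_def mat_mult_n_def transpose_n_def inner ..
  also have "\<dots> = (\<Sum>k<n. if \<sigma> j = k then S (\<sigma> i) k else 0)"
    using g j by (intro sum.cong) auto
  also have "\<dots> = S (\<sigma> i) (\<sigma> j)" using si by (simp add: sum.delta)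
  finally show "congr_n n g S i j = S (\<sigma> i) (\<sigma> j)" .
qed

lemma sorting_perm:
  fixes S :: "nat \<Rightarrow> nat \<Rightarrow> real"
  shows "\<exists>\<sigma>. \<sigma> permutes {..<n} \<and> sorted_diag n (\<lambda>i j. S (\<sigma> i) (\<sigma> j))"
proof -
  define xs where "xs = sort_key (\<lambda>i. S i i) [0..<n]"
  define \<sigma> where "\<sigma> = (\<lambda>i. if i < n then xs ! i else i)"
  have len: "length xs = n" and dist: "distinct xs" and st: "set xs = {..<n}"
    by (auto simp: xs_def)
  have srt: "sorted (map (\<lambda>i. S i i) xs)" by (simp add: xs_def)
  have "bij_betw ((!) xs) {..<n} {..<n}" using bij_betw_nth[OF dist] len st by simp
  hence "bij_betw \<sigma> {..<n} {..<n}" by (rule bij_betw_cong[THEN iffD1, rotated]) (simp add: \<sigma>_def)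
  hence p: "\<sigma> permutes {..<n}" by (rule bij_imp_permutes) (simp add: \<sigma>_def)
  have "sorted_diag n (\<lambda>i j. S (\<sigma> i) (\<sigma> j))"
    unfolding sorted_diag_def
  proof (intro allI impI)
    fix a b :: nat assume ab: "a \<le> b" "b < n"
    have "map (\<lambda>i. S i i) xs ! a \<le> map (\<lambda>i. S i i) xs ! b"
      using sorted_nth_mono[OF srt ab(1)] ab len by simp
    then show "S (\<sigma> a) (\<sigma> a) \<le> S (\<sigma> b) (\<sigma> b)" using ab len by (simp add: \<sigma>_def)
  qed
  with p show ?thesis by blast
qed

lemma posdef_diag:
  assumes "posdef_n n S" "j < n"
  shows "0 < S j j"
proof -
  have "\<exists>i<n. ev j i \<noteq> 0" using assms(2) by (auto simp: ev_def)
  then have "0 < qform n S (ev j)" using assms(1) unfolding posdef_n_def by blast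
  then show ?thesis using qform_unit[OF assms(2)] by simp
qed

theorem mainTheorem3:
  fixes n :: nat and S :: "nat \<Rightarrow> nat \<Rightarrow> real"
  assumes "n \<le> 4" and "symmetric_n n S" and "posdef_n n S"
  shows "venkov_reduced n S \<longleftrightarrow> (\<exists>g. perm_matrix_n n g \<and> minkowski_reduced n (congr_n n g S))"
proof
  assume V: "venkov_reduced n S"
  obtain \<sigma> where s: "\<sigma> permutes {..<n}" and srt: "sorted_diag n (\<lambda>i j. S (\<sigma> i) (\<sigma> j))"
    using sorting_perm by blast
  define S' where "S' = (\<lambda>i j. S (\<sigma> i) (\<sigma> j))"
  have V': "venkov_reduced n S'" unfolding S'_def by (rule venkov_perm[OF V s])
  have pos: "\<forall>j<n. 0 \<le> S' j j"
    using posdef_diag[OF assms(3)] permutes_in_image[OF s] unfolding S'_def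
    by (simp add: less_imp_le)
  have P: "Pprop n S'" using U_imp_P[OF assms(1) venkov_imp_U[OF V'] srt[folded S'_def] pos] .
  have M: "minkowski_reduced n S'" by (rule P_imp_mink[OF P srt[folded S'_def]])
  define g where "g = (\<lambda>i j. if \<sigma> i = j then 1 else (0::real))"
  have pm: "perm_matrix_n n g" unfolding perm_matrix_n_def g_def using s by blast
  have "\<forall>i<n. \<forall>j<n. congr_n n g S i j = S' i j"
    using congr_perm[of n g \<sigma> S] s unfolding g_def S'_def by simp
  then have "minkowski_reduced n (congr_n n g S)" using M mink_agree[of n "congr_n n g S" S'] by simp
  with pm show "\<exists>g. perm_matrix_n n g \<and> minkowski_reduced n (congr_n n g S)" by blast
next
  assume "\<exists>g. perm_matrix_n n g \<and> minkowski_reduced n (congr_n n g S)"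
  then obtain g \<sigma> where M0: "minkowski_reduced n (congr_n n g S)" and s: "\<sigma> permutes {..<n}"
    and g: "\<forall>i<n. \<forall>j<n. g i j = (if \<sigma> i = j then 1 else 0)"
    unfolding perm_matrix_n_def by blast
  define S' where "S' = (\<lambda>i j. S (\<sigma> i) (\<sigma> j))"
  have M: "minkowski_reduced n S'"
    using M0 mink_agree[of n "congr_n n g S" S'] congr_perm[OF g s, of S] unfolding S'_def by simp
  have pos: "\<forall>j<n. 0 \<le> S' j j"
    using posdef_diag[OF assms(3)] permutes_in_image[OF s] unfolding S'_def
    by (simp add: less_imp_le)
  have srt: "sorted_diag n S'" by (rule mink_imp_sorted[OF M])
  have P: "Pprop n S'" by (rule U_imp_P[OF assms(1) mink_imp_U[OF M] srt pos])
  have V': "venkov_reduced n S'" by (rule P_imp_venkov[OF P srt])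
  have "venkov_reduced n (\<lambda>i j. S' (inv \<sigma> i) (inv \<sigma> j))"
    by (rule venkov_perm[OF V' permutes_inv[OF s]])
  moreover have "(\<lambda>i j. S' (inv \<sigma> i) (inv \<sigma> j)) = S"
    unfolding S'_def permutes_inverses[OF s] ..
  ultimately show "venkov_reduced n S" by simp
qed


end
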